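(* Let $\mathscr Q_n$ be a non-singular quadric in $\mathrm{PG}(n,2)$ of projective index $g\ge 1$, let $0\le s<g$, let $\alpha_s$ be an $s$-dimensional subspace contained in $\mathscr Q_n$, and let $\Gamma_s$ be the graph constructed from $\alpha_s$ as described below. Then for distinct vertices $X,Y$ of $\Gamma_s$: if one of $X,Y$ has type (ii) and the other has type (iii), then $X,Y$ are adjacent in $\Gamma_s$ if and only if the line $XY$ is not contained in $\mathscr Q_n$ (i.e. it is a 2-secant of $\mathscr Q_n$); otherwise $X,Y$ are adjacent in $\Gamma_s$ if and only if the line $XY$ is contained in $\mathscr Q_n$. In particular, two type (i) vertices are always adjacent, and a type (i) vertex is always adjacent to a type (ii) vertex.
   Context: A non-singular quadric $\mathscr Q_n$ in $\mathrm{PG}(n,2)$ is the point set of a non-degenerate quadric; its projective index $g$ is the largest dimension of a projective subspace contained in $\mathscr Q_n$. The point-graph $\Gamma$ has vertex set the points of $\mathscr Q_n$, two distinct points adjacent iff the line joining them is contained in $\mathscr Q_n$. A point $X$ of $\mathscr Q_n$ has type (i) if $X\in\alpha_s$; type (ii) if $X\notin\alpha_s$ and $\langle\alpha_s,X\rangle\subseteq\mathscr Q_n$; type (iii) otherwise. Let $\mathcal X_s$ be the type (ii) points and $\mathcal Y_s$ the points of type (i) or (iii). The graph $\Gamma_s$ has the same vertex set as $\Gamma$ and the same edges, except that for each vertex $R\in\mathcal Y_s$ having exactly $\frac12|\mathcal X_s|$ neighbours in $\mathcal X_s$ (in $\Gamma$), those edges are deleted and $R$ is joined instead to the other $\frac12|\mathcal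 X_s|$ vertices of $\mathcal X_s$. A 2-secant is a line meeting $\mathscr Q_n$ in exactly two points. *)

theory Defs
  imports "HOL-Analysis.Cartesian_Space" "HOL-Library.Z2"
begin

text \<open>PG(n,2): points are the nonzero vectors of bit^'n, where CARD('n) = n+1
  and bit is the field with two elements. A quadric is given by a quadratic
  form Q(x) = sum_{i,j} A i j x_i x_j (every quadratic form over GF(2) has this shape).\<close>

definition qf :: "('n::finite \<Rightarrow> 'n \<Rightarrow> bit) \<Rightarrow> bit ^ 'n \<Rightarrow> bit" where
  "qf A x = (\<Sum>i\<in>UNIV. \<Sum>j\<in>UNIV. A i j * x $ i * x $ j)"

definition polar :: "('n::finite \<Rightarrow> 'n \<Rightarrow> bit) \<Rightarrow> bit ^ 'n \<Rightarrow> bit ^ 'n \<Rightarrow> bit" where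
  "polar A x y = qf A (x + y) - qf A x - qf A y"

definition nonsingular :: "('n::finite \<Rightarrow> 'n \<Rightarrow> bit) \<Rightarrow> bool" where
  "nonsingular A \<longleftrightarrow> \<not> (\<exists>x. x \<noteq> 0 \<and> qf A x = 0 \<and> (\<forall>y. polar A x y = 0))"

definition quadric :: "('n::finite \<Rightarrow> 'n \<Rightarrow> bit) \<Rightarrow> (bit ^ 'n) set" where
  "quadric A = {x. x \<noteq> 0 \<and> qf A x = 0}"

text \<open>Projective subspace of projective dimension d: nonzero vectors of a linear
  subspace of (vector space) dimension d+1.\<close>
definition proj_subspace :: "(bit ^ 'n::finite) set \<Rightarrow> nat \<Rightarrow> bool" where
  "proj_subspace P d \<longleftrightarrow> (\<exists>U. vec.subspace U \<and> vec.dim U = d + 1 \<and> P = U - {0})"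

definition proj_span :: "(bit ^ 'n::finite) set \<Rightarrow> (bit ^ 'n) set" where
  "proj_span S = vec.span S - {0}"

definition proj_index :: "('n::finite \<Rightarrow> 'n \<Rightarrow> bit) \<Rightarrow> nat" where
  "proj_index A = (GREATEST d. \<exists>P. proj_subspace P d \<and> P \<subseteq> quadric A)"

definition adjG :: "('n::finite \<Rightarrow> 'n \<Rightarrow> bit) \<Rightarrow> bit ^ 'n \<Rightarrow> bit ^ 'n \<Rightarrow> bool" where
  "adjG A X Y \<longleftrightarrow> X \<in> quadric A \<and> Y \<in> quadric A \<and> X \<noteq> Y \<and> proj_span {X, Y} \<subseteq> quadric A"

definition type_i :: "('n::finite \<Rightarrow> 'n \<Rightarrow> bit) \<Rightarrow> (bit ^ 'n) set \<Rightarrow> bit ^ 'n \<Rightarrow> bool" where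
  "type_i A W X \<longleftrightarrow> X \<in> quadric A \<and> X \<in> W"

definition type_ii :: "('n::finite \<Rightarrow> 'n \<Rightarrow> bit) \<Rightarrow> (bit ^ 'n) set \<Rightarrow> bit ^ 'n \<Rightarrow> bool" where
  "type_ii A W X \<longleftrightarrow> X \<in> quadric A \<and> X \<notin> W \<and> proj_span (insert X W) \<subseteq> quadric A"

definition type_iii :: "('n::finite \<Rightarrow> 'n \<Rightarrow> bit) \<Rightarrow> (bit ^ 'n) set \<Rightarrow> bit ^ 'n \<Rightarrow> bool" where
  "type_iii A W X \<longleftrightarrow> X \<in> quadric A \<and> X \<notin> W \<and> \<not> proj_span (insert X W) \<subseteq> quadric A"

definition Xset :: "('n::finite \<Rightarrow> 'n \<Rightarrow> bit) \<Rightarrow> (bit ^ 'n) set \<Rightarrow> (bit ^ 'n) set" where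
  "Xset A W = {X. type_ii A W X}"

definition Yset :: "('n::finite \<Rightarrow> 'n \<Rightarrow> bit) \<Rightarrow> (bit ^ 'n) set \<Rightarrow> (bit ^ 'n) set" where
  "Yset A W = {X. type_i A W X \<or> type_iii A W X}"

definition switched :: "('n::finite \<Rightarrow> 'n \<Rightarrow> bit) \<Rightarrow> (bit ^ 'n) set \<Rightarrow> bit ^ 'n \<Rightarrow> bool" where
  "switched A W R \<longleftrightarrow> R \<in> Yset A W \<and>
     2 * card {P \<in> Xset A W. adjG A R P} = card (Xset A W)"

definition adjGs :: "('n::finite \<Rightarrow> 'n \<Rightarrow> bit) \<Rightarrow> (bit ^ 'n) set \<Rightarrow> bit ^ 'n \<Rightarrow> bit ^ 'n \<Rightarrow> bool" where
  "adjGs A W X Y \<longleftrightarrow> X \<in> quadric A \<and> Y \<in> quadric A \<and> X \<noteq> Y \<and>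
     (if (X \<in> Xset A W \<and> switched A W Y) \<or> (Y \<in> Xset A W \<and> switched A W X)
      then \<not> adjG A X Y else adjG A X Y)"

end

theory Submission
  imports Defs
begin

instance bit :: finite
proof
  have "(UNIV :: bit set) = {0, 1}" by (auto intro: bit.exhaust)
  then show "finite (UNIV :: bit set)" by (metis finite.emptyI finite.insertI)
qed

lemma bit_cases2: "(k::bit) = 0 \<or> k = 1" by (cases k) auto

lemma bit_add_self: "(a::bit) + a = 0" by (cases a) auto

lemma vadd_self: "(x::bit^'n) + x = 0"
  by (simp add: vec_eq_iff bit_add_self del: add_bit_eq_xor)

lemma vadd_self2: "(x::bit^'n) + (x + y) = y"
  by (metis add.assoc add_0 vadd_self)

lemma vadd_self3: "(y::bit^'n) + x + x = y"
  by (metis add.assoc add_0_right vadd_self)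

lemma vneg: "- (x::bit^'n) = x"
  by (metis add_eq_0_iff vadd_self)

lemma vminus: "(x::bit^'n) - y = x + y"
  by (simp add: vneg)

lemma vadd_eq0: "(x::bit^'n) + a = 0 \<longleftrightarrow> x = a"
  by (metis vadd_self vadd_self3)

lemma in_span_insert:
  "(x::bit^'n::finite) \<in> vec.span (insert a S) \<longleftrightarrow> x \<in> vec.span S \<or> x + a \<in> vec.span S"
proof
  assume "x \<in> vec.span (insert a S)"
  then obtain k where k: "x - k *s a \<in> vec.span S" using vec.span_breakdown_eq by blast
  show "x \<in> vec.span S \<or> x + a \<in> vec.span S"
    using bit_cases2[of k] k by (auto simp: vminus)
next
  assume "x \<in> vec.span S \<or> x + a \<in> vec.span S"
  then show "x \<in> vec.span (insert a S)"
  proof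
    assume "x \<in> vec.span S" then show ?thesis using vec.span_breakdown_eq[of x a S]
      by (metis diff_zero vector_smult_lzero)
  next
    assume "x + a \<in> vec.span S" then show ?thesis using vec.span_breakdown_eq[of x a S]
      by (metis vector_smult_lid vminus)
  qed
qed

lemma span_pair: "vec.span {X, Y::bit^'n::finite} = {0, X, Y, X + Y}"
proof -
  have "x \<in> vec.span {X, Y} \<longleftrightarrow> x \<in> {0, X, Y, X + Y}" for x
    unfolding in_span_insert[of x X "{Y}"] in_span_insert[of x Y "{}"]
      in_span_insert[of "x + X" Y "{}"] vec.span_empty
    by (simp only: add.assoc vadd_eq0 insert_iff empty_iff) blast
  then show ?thesis by blast
qed

lemma qf0: "qf A 0 = 0" by (simp add: qf_def)

lemma qf_add: "qf A (x + y) = qf A x + qf A y + polar A x y"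
  by (simp add: polar_def del: add_bit_eq_xor)

lemma polar_expand: "polar A x y = (\<Sum>i\<in>UNIV. \<Sum>j\<in>UNIV. A i j * (x$i*y$j + y$i*x$j))"
proof -
  have "qf A (x + y) = qf A x + qf A y + (\<Sum>i\<in>UNIV. \<Sum>j\<in>UNIV. A i j * (x$i*y$j + y$i*x$j))"
    unfolding qf_def by (simp add: sum.distrib[symmetric] algebra_simps del: add_bit_eq_xor mult_bit_eq_and)
  then show ?thesis by (simp add: polar_def del: add_bit_eq_xor mult_bit_eq_and)
qed

lemma polar_add1: "polar A (x + y) z = polar A x z + polar A y z"
  unfolding polar_expand
  by (simp add: sum.distrib[symmetric] algebra_simps del: add_bit_eq_xor mult_bit_eq_and)

lemma adjG_iff:
  assumes "R \<in> quadric A" "P \<in> quadric A" "R \<noteq> P"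
  shows "adjG A R P \<longleftrightarrow> qf A (R + P) = 0"
proof -
  have nz: "R + P \<noteq> 0" using assms(3) vadd_eq0 by blast
  have "proj_span {R, P} = {R, P, R + P}"
    using assms nz unfolding proj_span_def span_pair quadric_def by auto
  then show ?thesis using assms nz unfolding adjG_def quadric_def by auto
qed

locale setting =
  fixes A :: "'n::finite \<Rightarrow> 'n \<Rightarrow> bit" and W U :: "(bit ^ 'n) set"
  assumes sub: "vec.subspace U" and WU: "W = U - {0}" and Wq: "W \<subseteq> quadric A"
begin

lemma spanW: "vec.span W = U"
  using sub WU by (simp add: vec.span_eq_iff)

lemma qfU: "u \<in> U \<Longrightarrow> qf A u = 0"
  using Wq WU qf0[of A] unfolding quadric_def by (cases "u = 0") auto

lemma span_insW: "x \<in> vec.span (insert P W) \<longleftrightarrow> x \<in> U \<or> x + P \<in> U"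
  using in_span_insert[of x P W] spanW by simp

lemma notU: "P \<in> quadric A \<Longrightarrow> P \<notin> W \<Longrightarrow> P \<notin> U"
  using WU unfolding quadric_def by auto

lemma addU: "u \<in> U \<Longrightarrow> v \<in> U \<Longrightarrow> u + v \<in> U"
  using sub vec.subspace_add by blast

lemma type_i_ii_adj:
  assumes "type_i A W R" "type_ii A W P"
  shows "adjG A R P"
proof -
  have "vec.span {R, P} \<subseteq> vec.span (insert P W)"
    using assms unfolding type_i_def by (intro vec.span_mono) auto
  then have "proj_span {R, P} \<subseteq> quadric A"
    using assms unfolding type_ii_def proj_span_def by auto
  moreover have "R \<noteq> P" using assms unfolding type_i_def type_ii_def by auto
  ultimately show ?thesis using assms unfolding adjG_def type_i_def type_ii_def by auto
qed

lemma half: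
  assumes R: "type_iii A W R"
  shows "2 * card {P \<in> Xset A W. adjG A R P} = card (Xset A W)"
proof -
  from R obtain x where x: "x \<in> vec.span (insert R W)" "x \<noteq> 0" "x \<notin> quadric A"
    unfolding type_iii_def proj_span_def by auto
  have "x \<notin> U" using x WU Wq by auto
  then have u0U: "x + R \<in> U" using x span_insW by auto
  define u0 where "u0 = x + R"
  have Ru0: "R + u0 = x" unfolding u0_def by (metis add.commute vadd_self3)
  have qx: "qf A x = 1" using x unfolding quadric_def by auto
  have pRu0: "polar A R u0 = 1"
    using qf_add[of A R u0] Ru0 qx qfU[OF u0U[folded u0_def]] R
    unfolding type_iii_def quadric_def by (simp del: add_bit_eq_xor)
  have u0: "u0 \<in> U" using u0U u0_def by simp
  define f where "f P = P + u0" for P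
  have ff: "f (f P) = P" for P unfolding f_def by (simp add: vadd_self3)
  have fX: "f P \<in> Xset A W \<and> polar A P u0 = 0" if P: "P \<in> Xset A W" for P
  proof -
    have tP: "type_ii A W P" using P unfolding Xset_def by simp
    have PU: "P \<notin> U" using tP notU unfolding type_ii_def by auto
    have sp: "P + u0 \<in> vec.span (insert P W)" using span_insW u0
      by (metis add.commute vadd_self2)
    have nz: "P + u0 \<noteq> 0" using PU u0 vadd_eq0[of P u0] by auto
    have q: "P + u0 \<in> quadric A" using tP sp nz unfolding type_ii_def proj_span_def by auto
    have nW: "P + u0 \<notin> W"
    proof
      assume "P + u0 \<in> W"
      then have "P + u0 \<in> U" using WU by auto
      then have "P + u0 + u0 \<in> U" using u0 addU by blast
      then show False using PU by (simp add: vadd_self3)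
    qed
    have "insert (P + u0) W \<subseteq> vec.span (insert P W)"
      using sp vec.span_superset by blast
    then have "vec.span (insert (P + u0) W) \<subseteq> vec.span (insert P W)"
      by (intro vec.span_minimal) (auto simp: vec.subspace_span)
    then have "proj_span (insert (P + u0) W) \<subseteq> quadric A"
      using tP unfolding type_ii_def proj_span_def by auto
    then have "f P \<in> Xset A W" using q nW unfolding f_def Xset_def type_ii_def by auto
    moreover have "polar A P u0 = 0"
      using qf_add[of A P u0] q tP qfU[OF u0] unfolding quadric_def type_ii_def
      by (simp del: add_bit_eq_xor)
    ultimately show ?thesis by simp
  qed
  have fadj: "adjG A R (f P) \<longleftrightarrow> \<not> adjG A R P" if P: "P \<in> Xset A W" for P
  proof -
    have fP: "f P \<in> Xset A W" and p0: "polar A P u0 = 0" using fX[OF P] by auto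
    have ne: "R \<noteq> Q" if "Q \<in> Xset A W" for Q
      using that R unfolding Xset_def type_ii_def type_iii_def by auto
    have qP: "P \<in> quadric A" "f P \<in> quadric A" "R \<in> quadric A"
      using P fP R unfolding Xset_def type_ii_def type_iii_def by auto
    have "qf A (R + f P) = qf A (R + P) + 1"
      using qf_add[of A "R + P" u0] polar_add1[of A R P u0] pRu0 p0 qfU[OF u0]
      unfolding f_def by (simp add: add.assoc del: add_bit_eq_xor)
    then have "qf A (R + f P) = 0 \<longleftrightarrow> qf A (R + P) \<noteq> 0"
      using bit_cases2[of "qf A (R + P)"] by auto
    then show ?thesis using adjG_iff qP ne P fP by metis
  qed
  define S1 where "S1 = {P \<in> Xset A W. adjG A R P}"
  define S0 where "S0 = {P \<in> Xset A W. \<not> adjG A R P}"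
  have inj: "inj f" by (metis ff injI)
  have i1: "f ` S1 \<subseteq> S0" unfolding S1_def S0_def using fX fadj by auto
  have i0: "f ` S0 \<subseteq> S1" unfolding S1_def S0_def using fX fadj by auto
  have "card S1 \<le> card S0"
    using card_inj_on_le[OF inj_on_subset[OF inj subset_UNIV] i1] by simp
  moreover have "card S0 \<le> card S1"
    using card_inj_on_le[OF inj_on_subset[OF inj subset_UNIV] i0] by simp
  moreover have "card (Xset A W) = card S1 + card S0"
  proof -
    have "Xset A W = S1 \<union> S0" unfolding S1_def S0_def by auto
    moreover have "S1 \<inter> S0 = {}" unfolding S1_def S0_def by auto
    ultimately show ?thesis by (simp add: card_Un_disjoint)
  qed
  ultimately show ?thesis unfolding S1_def by simp
qed

end

theorem corollary4p5:
  fixes A :: "'n::finite \<Rightarrow> 'n \<Rightarrow> bit"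
    and W :: "(bit ^ 'n) set"
    and X Y :: "bit ^ 'n"
    and g s :: nat
  assumes "nonsingular A"
    and "proj_index A = g" and "1 \<le> g" and "s < g"
    and "proj_subspace W s" and "W \<subseteq> quadric A"
    and "X \<in> quadric A" and "Y \<in> quadric A" and "X \<noteq> Y"
  shows "((type_ii A W X \<and> type_iii A W Y) \<or> (type_iii A W X \<and> type_ii A W Y)
            \<longrightarrow> (adjGs A W X Y \<longleftrightarrow> \<not> proj_span {X, Y} \<subseteq> quadric A))
       \<and> (\<not> ((type_ii A W X \<and> type_iii A W Y) \<or> (type_iii A W X \<and> type_ii A W Y))
            \<longrightarrow> (adjGs A W X Y \<longleftrightarrow> proj_span {X, Y} \<subseteq> quadric A))
       \<and> (type_i A W X \<and> type_i A W Y \<longrightarrow> adjGs A W X Y)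
       \<and> (type_i A W X \<and> type_ii A W Y \<longrightarrow> adjGs A W X Y)"
proof -
  obtain U where U: "vec.subspace U" "W = U - {0}"
    using assms(5) unfolding proj_subspace_def by blast
  interpret setting A W U using U assms(6) by unfold_locales auto
  have adjeq: "adjG A X Y \<longleftrightarrow> proj_span {X, Y} \<subseteq> quadric A"
    using assms(7-9) unfolding adjG_def by auto
  have sw3: "switched A W Z" if "type_iii A W Z" for Z
    using half[OF that] that unfolding switched_def Yset_def by auto
  have nsw1: "\<not> switched A W Z" if Z: "type_i A W Z" and ne: "Q \<in> Xset A W" for Z Q
  proof
    assume "switched A W Z"
    then have c: "2 * card {P \<in> Xset A W. adjG A Z P} = card (Xset A W)"
      unfolding switched_def by auto
    have "{P \<in> Xset A W. adjG A Z P} = Xset A W"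
      using type_i_ii_adj[OF Z] unfolding Xset_def by auto
    moreover have "card (Xset A W) > 0"
      using ne by (auto simp: card_gt_0_iff)
    ultimately show False using c by simp
  qed
  let ?C = "(type_ii A W X \<and> type_iii A W Y) \<or> (type_iii A W X \<and> type_ii A W Y)"
  have cA: "adjGs A W X Y \<longleftrightarrow> \<not> proj_span {X, Y} \<subseteq> quadric A" if ?C
  proof -
    have "(X \<in> Xset A W \<and> switched A W Y) \<or> (Y \<in> Xset A W \<and> switched A W X)"
      using that sw3 unfolding Xset_def by auto
    then show ?thesis using adjeq assms(7-9) unfolding adjGs_def by auto
  qed
  have cB: "adjGs A W X Y \<longleftrightarrow> proj_span {X, Y} \<subseteq> quadric A" if nC: "\<not> ?C"
  proof -
    have "\<not> ((X \<in> Xset A W \<and> switched A W Y) \<or> (Y \<in> Xset A W \<and> switched A W X))"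
    proof
      assume "(X \<in> Xset A W \<and> switched A W Y) \<or> (Y \<in> Xset A W \<and> switched A W X)"
      then show False
      proof
        assume h: "X \<in> Xset A W \<and> switched A W Y"
        then have "type_i A W Y \<or> type_iii A W Y" unfolding switched_def Yset_def by auto
        then show False using h nC nsw1 unfolding Xset_def by blast
      next
        assume h: "Y \<in> Xset A W \<and> switched A W X"
        then have "type_i A W X \<or> type_iii A W X" unfolding switched_def Yset_def by auto
        then show False using h nC nsw1 unfolding Xset_def by blast
      qed
    qed
    then show ?thesis using adjeq assms(7-9) unfolding adjGs_def by auto
  qed
  have excl: "\<not> type_ii A W Z" "\<not> type_iii A W Z" if "type_i A W Z" for Z
    using that unfolding type_i_def type_ii_def type_iii_def by auto
  have t3: "adjGs A W X Y" if h: "type_i A W X \<and> type_i A W Y"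
  proof -
    have "vec.span {X, Y} \<subseteq> vec.span W"
      using h unfolding type_i_def by (intro vec.span_mono) auto
    then have "vec.span {X, Y} \<subseteq> U" using spanW by simp
    then have "proj_span {X, Y} \<subseteq> W" using U unfolding proj_span_def by auto
    then have "proj_span {X, Y} \<subseteq> quadric A" using assms(6) by auto
    then show ?thesis using cB excl h by blast
  qed
  have t4: "adjGs A W X Y" if h: "type_i A W X \<and> type_ii A W Y"
    using cB excl h type_i_ii_adj adjeq by blast
  show ?thesis using cA cB t3 t4 by blast
qed

end
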